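(* Let $r\ge 3$ and $n\ge 2r$, and let $M$ be a matroid of rank $r$ on a linearly ordered set $E$ with $|E|=n$. Then \[ \sum_{k=0}^{r-1}|\mathcal V_k|\,c_k\le 1,\qquad\text{where } c_{r-1}=\frac{r}{\binom{n}{r-1}},\quad c_0=\frac1n,\quad c_k=\frac{k}{\binom nk}\ (0<k<r-1). \]
   Context: Graded lexicographic order on $2^E$: $X\prec Y$ if $|X|<|Y|$, or $|X|=|Y|$ and $\min(X\triangle Y)\in X$; $\min\mathcal X$ is the $\prec$-smallest member. $X$ is $k$-closed in $M$ if $\mathrm{cl}_M(Y)\subseteq X$ for all $Y\subseteq X$ with $|Y|\le k$; $\mathrm{cl}_k(X)$ is the intersection of all $k$-closed supersets of $X$ (so $\mathrm{cl}_{-1}(X)=X$). For a flat $F$ of rank $k$, $U^*_F=\min\{U:\mathrm{cl}_{k-1}(U)=F\}$; $\mathcal U^*_k=\{U^*_F: F\text{ a flat of rank }k,\ |U^*_F|>k\}$. $V\subseteq U$ is consecutive in $U$ if there are no $e,g\in V$, $f\in U\setminus V$ with $e<f<g$. For $U\in\mathcal U^*_k$, $\mathcal V(U)$ is the set of consecutive $(k+1)$-subsets of $U$, and $\mathcal V_k=\bigcup_{U\in\mathcal U^*_k}\mathcal V(U)$. *)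

theory Defs
  imports Complex_Main
begin

definition matroid :: "'a set \<Rightarrow> ('a set \<Rightarrow> bool) \<Rightarrow> bool" where
  "matroid E indep \<longleftrightarrow> finite E \<and> indep {} \<and>
     (\<forall>X. indep X \<longrightarrow> X \<subseteq> E) \<and>
     (\<forall>X Y. indep X \<and> Y \<subseteq> X \<longrightarrow> indep Y) \<and>
     (\<forall>X Y. indep X \<and> indep Y \<and> card X < card Y \<longrightarrow>
        (\<exists>e \<in> Y - X. indep (insert e X)))"

definition mrank :: "('a set \<Rightarrow> bool) \<Rightarrow> 'a set \<Rightarrow> nat" where
  "mrank indep X = Max {card I | I. I \<subseteq> X \<and> indep I}"

definition mcl :: "'a set \<Rightarrow> ('a set \<Rightarrow> bool) \<Rightarrow> 'a set \<Rightarrow> 'a set" where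
  "mcl E indep X = {e \<in> E. mrank indep (insert e X) = mrank indep X}"

definition flat :: "'a set \<Rightarrow> ('a set \<Rightarrow> bool) \<Rightarrow> 'a set \<Rightarrow> bool" where
  "flat E indep F \<longleftrightarrow> F \<subseteq> E \<and> mcl E indep F = F"

text \<open>X is k-closed: cl(Y) \<subseteq> X for all Y \<subseteq> X with |Y| \<le> k (k an integer, possibly -1).\<close>
definition k_closed :: "'a set \<Rightarrow> ('a set \<Rightarrow> bool) \<Rightarrow> int \<Rightarrow> 'a set \<Rightarrow> bool" where
  "k_closed E indep k X \<longleftrightarrow> X \<subseteq> E \<and>
     (\<forall>Y. Y \<subseteq> X \<and> int (card Y) \<le> k \<longrightarrow> mcl E indep Y \<subseteq> X)"

definition clk :: "'a set \<Rightarrow> ('a set \<Rightarrow> bool) \<Rightarrow> int \<Rightarrow> 'a set \<Rightarrow> 'a set" where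
  "clk E indep k X = \<Inter> {Z. X \<subseteq> Z \<and> k_closed E indep k Z}"

definition glex_less :: "'a::linorder set \<Rightarrow> 'a set \<Rightarrow> bool" where
  "glex_less X Y \<longleftrightarrow> card X < card Y \<or>
     (card X = card Y \<and> X \<noteq> Y \<and> Min (X - Y \<union> (Y - X)) \<in> X)"

definition glex_min :: "'a::linorder set set \<Rightarrow> 'a set" where
  "glex_min \<X> = (THE U. U \<in> \<X> \<and> (\<forall>V \<in> \<X>. V \<noteq> U \<longrightarrow> glex_less U V))"

definition Ustar :: "'a::linorder set \<Rightarrow> ('a set \<Rightarrow> bool) \<Rightarrow> 'a set \<Rightarrow> 'a set" where
  "Ustar E indep F =
     glex_min {U. U \<subseteq> E \<and> clk E indep (int (mrank indep F) - 1) U = F}"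

definition Ustar_k :: "'a::linorder set \<Rightarrow> ('a set \<Rightarrow> bool) \<Rightarrow> nat \<Rightarrow> 'a set set" where
  "Ustar_k E indep k = {Ustar E indep F | F. flat E indep F \<and> mrank indep F = k
                              \<and> card (Ustar E indep F) > k}"

definition consecutive :: "'a::linorder set \<Rightarrow> 'a set \<Rightarrow> bool" where
  "consecutive V U \<longleftrightarrow> V \<subseteq> U \<and>
     \<not> (\<exists>e \<in> V. \<exists>g \<in> V. \<exists>f \<in> U - V. e < f \<and> f < g)"

definition Vsets :: "nat \<Rightarrow> 'a::linorder set \<Rightarrow> 'a set set" where
  "Vsets k U = {V. V \<subseteq> U \<and> card V = k + 1 \<and> consecutive V U}"

definition V_k :: "'a::linorder set \<Rightarrow> ('a set \<Rightarrow> bool) \<Rightarrow> nat \<Rightarrow> 'a set set" where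
  "V_k E indep k = (\<Union>U \<in> Ustar_k E indep k. Vsets k U)"

definition coef :: "nat \<Rightarrow> nat \<Rightarrow> nat \<Rightarrow> real" where
  "coef n r k = (if k = r - 1 then real r / real (n choose (r - 1))
                 else if k = 0 then 1 / real n
                 else real k / real (n choose k))"

end

theory Submission
  imports Defs
begin


lemma lym_nat:
  assumes "finite E" "A \<subseteq> Pow E" "\<forall>S\<in>A. \<forall>T\<in>A. S \<subseteq> T \<longrightarrow> S = T"
  shows "(\<Sum>S\<in>A. fact (card S) * fact (card E - card S)) \<le> (fact (card E) :: nat)"
  using assms
proof (induction "card E" arbitrary: E A rule: less_induct)
  case less
  show ?case
  proof (cases "E \<in> A")
    case True
    then have "A = {E}" using less.prems by blast
    then show ?thesis by simp
  next
    case False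
    let ?n = "card E"
    let ?g = "\<lambda>S. fact (card S) * fact (card E - 1 - card S) :: nat"
    have finA: "finite A" using less.prems finite_subset by (metis finite_Pow_iff)
    have psub: "S \<subset> E" if "S \<in> A" for S using False that less.prems by blast
    have cS: "card S < ?n" if "S \<in> A" for S using psub[OF that] less.prems(1) psubset_card_mono by blast
    have "(\<Sum>S\<in>A. fact (card S) * fact (card E - card S)) = (\<Sum>S\<in>A. \<Sum>x\<in>{x\<in>E. x \<notin> S}. ?g S)"
    proof (rule sum.cong[OF refl])
      fix S assume S: "S \<in> A"
      have "S \<subseteq> E" using S less.prems by blast
      then have c: "card {x\<in>E. x \<notin> S} = ?n - card S"
        using less.prems(1) by (metis Diff_iff card_Diff_subset finite_subset set_diff_eq subsetI) 
      have "?n - card S = Suc (?n - 1 - card S)" using cS[OF S] by simp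
      then show "fact (card S) * fact (card E - card S) = (\<Sum>x\<in>{x\<in>E. x \<notin> S}. ?g S)"
        using c by (simp add: algebra_simps)
    qed
    also have "\<dots> = (\<Sum>x\<in>E. \<Sum>S\<in>{S\<in>A. x \<notin> S}. ?g S)"
      using sum.swap_restrict[OF finA less.prems(1), of "\<lambda>S x. ?g S" "\<lambda>S x. x \<notin> S"] by simp
    also have "\<dots> \<le> (\<Sum>x\<in>E. fact (?n - 1))"
    proof (rule sum_mono)
      fix x assume x: "x \<in> E"
      have lt: "card (E - {x}) < ?n" using x less.prems(1) by (rule card_Diff1_less[rotated])
      have "(\<Sum>S\<in>{S\<in>A. x \<notin> S}. fact (card S) * fact (card (E - {x}) - card S)) \<le> (fact (card (E - {x})) :: nat)"
      proof -
        have h1: "finite (E - {x})" using less.prems by simp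
        have h2: "{S \<in> A. x \<notin> S} \<subseteq> Pow (E - {x})" using less.prems by auto
        have h3: "\<forall>S\<in>{S \<in> A. x \<notin> S}. \<forall>T\<in>{S \<in> A. x \<notin> S}. S \<subseteq> T \<longrightarrow> S = T" using less.prems by auto
        show ?thesis using less.hyps[OF lt h1 h2 h3] .
      qed
      then show "(\<Sum>S\<in>{S\<in>A. x \<notin> S}. ?g S) \<le> fact (?n - 1)"
        using x less.prems(1) by simp
    qed
    also have "\<dots> \<le> fact ?n"
      by (cases ?n) (simp_all add: fact_reduce)
    finally show ?thesis .
  qed
qed

lemma lym:
  assumes "finite E" "A \<subseteq> Pow E" "\<forall>S\<in>A. \<forall>T\<in>A. S \<subseteq> T \<longrightarrow> S = T"
  shows "(\<Sum>S\<in>A. 1 / real (card E choose card S)) \<le> 1"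
proof -
  have finA: "finite A" using assms finite_subset by (metis finite_Pow_iff)
  have "(\<Sum>S\<in>A. 1 / real (card E choose card S)) = (\<Sum>S\<in>A. real (fact (card S) * fact (card E - card S))) / fact (card E)"
    unfolding sum_divide_distrib
  proof (rule sum.cong[OF refl])
    fix S assume "S \<in> A"
    then have "card S \<le> card E" using assms by (meson PowD card_mono subsetD)
    then show "1 / real (card E choose card S) = real (fact (card S) * fact (card E - card S)) / fact (card E)"
      by (simp add: binomial_fact)
  qed
  also have "\<dots> \<le> 1"
  proof -
    have "real (\<Sum>S\<in>A. fact (card S) * fact (card E - card S)) \<le> real (fact (card E))"
      using lym_nat[OF assms] by linarith
    then show ?thesis by (simp add: divide_le_eq_1)
  qed
  finally show ?thesis .
qed



lemma glex_asym:
  assumes "finite X" "finite Y" "glex_less X Y" shows "\<not> glex_less Y X"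
proof
  assume YX: "glex_less Y X"
  from assms(3) YX have eq: "card X = card Y" "X \<noteq> Y" unfolding glex_less_def by auto
  let ?D = "X - Y \<union> (Y - X)"
  have D': "Y - X \<union> (X - Y) = ?D" by blast
  have "?D \<noteq> {}" using eq by blast
  moreover have "finite ?D" using assms by blast
  ultimately have "Min ?D \<in> ?D" by (rule Min_in[rotated])
  moreover have "Min ?D \<in> X" "Min ?D \<in> Y" using assms(3) YX eq D' unfolding glex_less_def by auto
  ultimately show False by blast
qed

lemma glex_total:
  assumes "finite X" "finite Y" "X \<noteq> Y" shows "glex_less X Y \<or> glex_less Y X"
proof (cases "card X = card Y")
  case True
  let ?D = "X - Y \<union> (Y - X)"
  have D': "Y - X \<union> (X - Y) = ?D" by blast
  have "?D \<noteq> {}" using assms by blast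
  moreover have "finite ?D" using assms by blast
  ultimately have "Min ?D \<in> ?D" by (rule Min_in[rotated])
  then show ?thesis using True assms D' unfolding glex_less_def by auto
next
  case False then show ?thesis unfolding glex_less_def by auto
qed

lemma glex_trans:
  assumes fin: "finite X" "finite Y" "finite Z" and XY: "glex_less X Y" and YZ: "glex_less Y Z"
  shows "glex_less X Z"
proof (cases "card X < card Z")
  case True then show ?thesis by (simp add: glex_less_def)
next
  case False
  have c: "card X \<le> card Y" "card Y \<le> card Z" using XY YZ unfolding glex_less_def by auto
  then have cc: "card X = card Y" "card Y = card Z" using False by auto
  have ne: "X \<noteq> Y" "Y \<noteq> Z" using XY YZ cc unfolding glex_less_def by auto
  define D1 where "D1 = X - Y \<union> (Y - X)"
  define D2 where "D2 = Y - Z \<union> (Z - Y)"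
  define D3 where "D3 = X - Z \<union> (Z - X)"
  define a where "a = Min D1"
  define b where "b = Min D2"
  have fD: "finite D1" "finite D2" "finite D3" using fin unfolding D1_def D2_def D3_def by auto
  have n1: "D1 \<noteq> {}" "D2 \<noteq> {}" using ne unfolding D1_def D2_def by auto
  have aD: "a \<in> D1" unfolding a_def using fD(1) n1(1) by (rule Min_in)
  have bD: "b \<in> D2" unfolding b_def using fD(2) n1(2) by (rule Min_in)
  have aX: "a \<in> X" using XY cc ne unfolding glex_less_def a_def D1_def by auto
  have bY: "b \<in> Y" using YZ cc ne unfolding glex_less_def b_def D2_def by auto
  have aY: "a \<notin> Y" using aD aX unfolding D1_def by auto
  have bZ: "b \<notin> Z" using bD bY unfolding D2_def by auto
  have below_a: "w \<in> X \<longleftrightarrow> w \<in> Y" if "w < a" for w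
  proof (rule ccontr)
    assume "\<not> (w \<in> X \<longleftrightarrow> w \<in> Y)"
    then have "w \<in> D1" unfolding D1_def by auto
    then have "a \<le> w" unfolding a_def using fD Min_le by blast
    then show False using that by simp
  qed
  have below_b: "w \<in> Y \<longleftrightarrow> w \<in> Z" if "w < b" for w
  proof (rule ccontr)
    assume "\<not> (w \<in> Y \<longleftrightarrow> w \<in> Z)"
    then have "w \<in> D2" unfolding D2_def by auto
    then have "b \<le> w" unfolding b_def using fD Min_le by blast
    then show False using that by simp
  qed
  obtain c where cX: "c \<in> X" and cZ: "c \<notin> Z" and cmin: "\<And>w. w < c \<Longrightarrow> w \<in> X \<longleftrightarrow> w \<in> Z"
  proof (cases a b rule: linorder_cases)
    case less
    show ?thesis
    proof (rule that[of a])
      show "a \<in> X" by (rule aX)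
      show "a \<notin> Z" using below_b[OF less] aY by simp
      fix w assume "w < a" then show "w \<in> X \<longleftrightarrow> w \<in> Z" using below_a[of w] below_b[of w] less by (meson less_trans)
    qed
  next
    case equal then show ?thesis using aY bY by simp
  next
    case greater
    show ?thesis
    proof (rule that[of b])
      show "b \<in> X" using below_a[OF greater] bY by simp
      show "b \<notin> Z" by (rule bZ)
      fix w assume "w < b" then show "w \<in> X \<longleftrightarrow> w \<in> Z" using below_a[of w] below_b[of w] greater by (meson less_trans)
    qed
  qed
  have "c \<in> D3" using cX cZ unfolding D3_def by auto
  moreover have "\<forall>y\<in>D3. c \<le> y"
  proof
    fix y assume "y \<in> D3"
    then have "\<not> (y \<in> X \<longleftrightarrow> y \<in> Z)" unfolding D3_def by auto
    then show "c \<le> y" using cmin by (meson not_less)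
  qed
  ultimately have "Min D3 = c" using fD by (intro Min_eqI) auto
  then show ?thesis using cX cZ cc unfolding glex_less_def D3_def by auto
qed

lemma glex_min_ex:
  assumes "finite \<X>" "\<X> \<noteq> {}" "\<forall>X\<in>\<X>. finite X"
  shows "\<exists>U\<in>\<X>. \<forall>V\<in>\<X>. V \<noteq> U \<longrightarrow> glex_less U V"
  using assms
proof (induction \<X> rule: finite_ne_induct)
  case (singleton x) then show ?case by auto
next
  case (insert x F)
  then obtain U where U: "U \<in> F" "\<forall>V\<in>F. V \<noteq> U \<longrightarrow> glex_less U V" by auto
  show ?case
  proof (cases "glex_less x U")
    case True
    show ?thesis
    proof (rule bexI[of _ x])
      show "\<forall>V\<in>insert x F. V \<noteq> x \<longrightarrow> glex_less x V"
      proof (intro ballI impI)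
        fix V assume V: "V \<in> insert x F" "V \<noteq> x"
        then have "V \<in> F" by auto
        show "glex_less x V"
        proof (cases "V = U")
          case True then show ?thesis using \<open>glex_less x U\<close> by simp
        next
          case False
          then have "glex_less U V" using U \<open>V \<in> F\<close> by auto
          have fx: "finite x" "finite U" "finite V" using insert.prems U(1) \<open>V \<in> F\<close> by auto
          show ?thesis by (rule glex_trans[OF fx \<open>glex_less x U\<close> \<open>glex_less U V\<close>])
        qed
      qed
    qed simp
  next
    case False
    have xU: "x \<noteq> U" using insert.hyps U by auto
    have fx: "finite x" "finite U" using insert.prems U(1) by auto
    have "glex_less U x" using glex_total[OF fx xU] False by blast
    then show ?thesis using U by (intro bexI[of _ U]) auto
  qed
qed

lemma glex_min_prop:
  assumes "finite \<X>" "\<X> \<noteq> {}" "\<forall>X\<in>\<X>. finite X"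
  shows "glex_min \<X> \<in> \<X> \<and> (\<forall>V\<in>\<X>. V \<noteq> glex_min \<X> \<longrightarrow> glex_less (glex_min \<X>) V)"
proof -
  obtain U where U: "U \<in> \<X>" "\<forall>V\<in>\<X>. V \<noteq> U \<longrightarrow> glex_less U V" using glex_min_ex[OF assms] by blast
  have uniq: "W = U" if "W \<in> \<X>" "\<forall>V\<in>\<X>. V \<noteq> W \<longrightarrow> glex_less W V" for W
  proof (rule ccontr)
    assume "W \<noteq> U"
    then have "glex_less W U" "glex_less U W" using that U by blast+
    moreover have "finite W" "finite U" using assms(3) U(1) that(1) by auto
    ultimately show False using glex_asym by blast
  qed
  have "glex_min \<X> = U" unfolding glex_min_def
  proof (rule the_equality)
    show "U \<in> \<X> \<and> (\<forall>V\<in>\<X>. V \<noteq> U \<longrightarrow> glex_less U V)" using U by blast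
    fix W assume "W \<in> \<X> \<and> (\<forall>V\<in>\<X>. V \<noteq> W \<longrightarrow> glex_less W V)"
    then show "W = U" using uniq by blast
  qed
  then show ?thesis using U by simp
qed



lemma consec_eq:
  fixes U V W :: "'a::linorder set"
  assumes fU: "finite U" and cV: "consecutive V U" and cW: "consecutive W U"
    and cc: "card V = card W" and ne: "V \<noteq> {}" and mx: "Max V = Max W"
  shows "V = W"
proof (rule ccontr)
  assume neq: "V \<noteq> W"
  have VU: "V \<subseteq> U" and WU: "W \<subseteq> U" using cV cW unfolding consecutive_def by blast+
  have fV: "finite V" and fW: "finite W" using VU WU fU finite_subset by blast+
  have "\<not> V \<subseteq> W"
  proof
    assume "V \<subseteq> W"
    then have "V = W" using card_subset_eq[OF fW] cc by simp
    then show False using neq by simp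
  qed
  then obtain a where a: "a \<in> V" "a \<notin> W" by blast
  define m where "m = Max V"
  have Wne: "W \<noteq> {}" using cc ne fV by auto
  have mV: "m \<in> V" unfolding m_def by (rule Max_in[OF fV ne])
  have mW: "m \<in> W" unfolding m_def mx by (rule Max_in[OF fW Wne])
  have "a \<le> m" unfolding m_def by (rule Max_ge[OF fV a(1)])
  then have am: "a < m" using a mW by (metis order_le_less)
  have aU: "a \<in> U" using a VU by blast
  have nc: "\<not> (\<exists>e\<in>W. \<exists>g\<in>W. \<exists>f\<in>U - W. e < f \<and> f < g)" using cW unfolding consecutive_def by blast
  have ncV: "\<not> (\<exists>e\<in>V. \<exists>g\<in>V. \<exists>f\<in>U - V. e < f \<and> f < g)" using cV unfolding consecutive_def by blast
  show False
  proof (cases "\<exists>e\<in>W. e < a")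
    case True
    then obtain e where "e \<in> W" "e < a" by blast
    then show False using nc mW am aU a(2) by blast
  next
    case False
    define S where "S = {u\<in>U. a < u \<and> u \<le> m}"
    have WS: "W \<subseteq> S"
    proof
      fix e assume e: "e \<in> W"
      have "e \<le> m" unfolding m_def mx by (rule Max_ge[OF fW e])
      moreover have "a < e" using False e a(2) by (metis linorder_neqE)
      ultimately show "e \<in> S" unfolding S_def using e WU by blast
    qed
    have SV: "insert a S \<subseteq> V"
    proof
      fix u assume "u \<in> insert a S"
      then consider "u = a" | "u \<in> U" "a < u" "u \<le> m" unfolding S_def by blast
      then show "u \<in> V"
      proof cases
        case 1 then show ?thesis using a by simp
      next
        case 2
        show ?thesis
        proof (cases "u = m")
          case True then show ?thesis using mV by simp
        next
          case False
          then have "u < m" using 2 by simp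
          then show ?thesis using ncV a(1) mV 2 by blast
        qed
      qed
    qed
    have fS: "finite S" unfolding S_def using fU by simp
    have "a \<notin> S" unfolding S_def by simp
    then have "card (insert a S) = Suc (card S)" using fS by simp
    moreover have "card (insert a S) \<le> card V" by (rule card_mono[OF fV SV])
    moreover have "card W \<le> card S" by (rule card_mono[OF fS WS])
    ultimately show False using cc by simp
  qed
qed

lemma vsets_card:
  fixes U :: "'a::linorder set"
  assumes fU: "finite U"
  shows "card (Vsets k U) \<le> card U - k"
proof -
  define \<rho> where "\<rho> u = card {w\<in>U. w < u}" for u
  have mono: "\<rho> u < \<rho> u'" if "u \<in> U" "u' \<in> U" "u < u'" for u u'
  proof -
    have "{w\<in>U. w < u} \<subset> {w\<in>U. w < u'}" using that by auto
    then show ?thesis unfolding \<rho>_def by (rule psubset_card_mono[rotated]) (simp add: fU)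
  qed
  have inj: "inj_on \<rho> U"
  proof (rule inj_onI)
    fix u u' assume "u \<in> U" "u' \<in> U" "\<rho> u = \<rho> u'"
    then show "u = u'" using mono[of u u'] mono[of u' u] by (metis less_irrefl linorder_neqE)
  qed
  have bnd: "\<rho> u < card U" if "u \<in> U" for u
  proof -
    have "{w\<in>U. w < u} \<subset> U" using that by auto
    then show ?thesis unfolding \<rho>_def by (rule psubset_card_mono[OF fU])
  qed
  define T where "T = {u\<in>U. k \<le> \<rho> u}"
  have injM: "inj_on Max (Vsets k U)"
  proof (rule inj_onI)
    fix V W assume V: "V \<in> Vsets k U" and W: "W \<in> Vsets k U" and eq: "Max V = Max W"
    have "card V = Suc k" "card W = Suc k" "consecutive V U" "consecutive W U"
      using V W unfolding Vsets_def by auto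
    moreover then have "V \<noteq> {}" by auto
    ultimately show "V = W" using consec_eq[OF fU _ _ _ _ eq] by simp
  qed
  have imgM: "Max ` Vsets k U \<subseteq> T"
  proof
    fix u assume "u \<in> Max ` Vsets k U"
    then obtain V where V: "V \<in> Vsets k U" and u: "u = Max V" by blast
    have VU: "V \<subseteq> U" and cV: "card V = Suc k" using V unfolding Vsets_def by auto
    have fV: "finite V" using VU fU finite_subset by blast
    have ne: "V \<noteq> {}" using cV by auto
    have uV: "u \<in> V" unfolding u by (rule Max_in[OF fV ne])
    have sub: "V - {u} \<subseteq> {w\<in>U. w < u}"
    proof
      fix w assume w: "w \<in> V - {u}"
      then have "w \<le> u" unfolding u using Max_ge[OF fV] by blast
      then show "w \<in> {w\<in>U. w < u}" using w VU by auto
    qed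
    have "card (V - {u}) = k" using cV uV fV by simp
    moreover have "card (V - {u}) \<le> \<rho> u" unfolding \<rho>_def by (rule card_mono[OF _ sub]) (simp add: fU)
    ultimately show "u \<in> T" unfolding T_def using uV VU by auto
  qed
  have "card (Vsets k U) = card (Max ` Vsets k U)" using card_image[OF injM] by simp
  also have "\<dots> \<le> card T" by (rule card_mono[OF _ imgM]) (simp add: T_def fU)
  also have "\<dots> = card (\<rho> ` T)" using card_image[OF inj_on_subset[OF inj]] unfolding T_def by auto
  also have "\<dots> \<le> card {k..<card U}"
  proof (rule card_mono)
    show "\<rho> ` T \<subseteq> {k..<card U}" unfolding T_def using bnd by auto
  qed simp
  also have "\<dots> = card U - k" by simp
  finally show ?thesis .
qed

lemma binom_ineq:
  assumes r: "3 \<le> r" and m: "r \<le> m"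
  shows "r * (m - (r - 1)) \<le> m choose (r - 1)"
  using m
proof (induction m rule: dec_induct)
  case base
  have "r choose (r - 1) = r choose (r - (r - 1))" by (rule binomial_symmetric) simp
  also have "r - (r - 1) = 1" using r by simp
  finally have "r choose (r - 1) = r" by simp
  moreover have "r - (r - 1) = 1" using r by simp
  ultimately show ?case by simp
next
  case (step n)
  have e: "r - 1 = Suc (r - 2)" using r by simp
  have A: "(Suc n choose (r - 1)) = (n choose (r - 2)) + (n choose (r - 1))" unfolding e by (rule binomial_Suc_Suc)
  have "n \<le> n choose (r - 2)" using r step.hyps by (intro upper_le_binomial) auto
  then have B: "r \<le> n choose (r - 2)" using step.hyps by linarith
  have "Suc n - (r - 1) = Suc (n - (r - 1))" using step.hyps r by simp
  then have C: "r * (Suc n - (r - 1)) = r * (n - (r - 1)) + r" by simp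
  show ?case using A B C step.IH by linarith
qed

definition Top :: "'b::linorder set \<Rightarrow> ('b set \<Rightarrow> bool) \<Rightarrow> nat \<Rightarrow> 'b set set" where
  "Top E' indep' k = (\<Union>U\<in>Ustar_k E' indep' k. {B. B \<subseteq> U \<and> card B = k})"


context
  fixes E :: "'a::linorder set" and indep :: "'a set \<Rightarrow> bool"
  assumes M: "matroid E indep"
begin


lemma finE: "finite E" using M by (simp add: matroid_def)
lemma indep_empty: "indep {}" using M by (simp add: matroid_def)
lemma indep_E: "indep X \<Longrightarrow> X \<subseteq> E" using M by (simp add: matroid_def)
lemma indep_subset: "indep X \<Longrightarrow> Y \<subseteq> X \<Longrightarrow> indep Y" using M unfolding matroid_def by blast
lemma augment: "indep X \<Longrightarrow> indep Y \<Longrightarrow> card X < card Y \<Longrightarrow> \<exists>e\<in>Y - X. indep (insert e X)"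
  using M unfolding matroid_def by blast
lemma indep_fin: "indep X \<Longrightarrow> finite X" using indep_E finE finite_subset by blast

lemma rank_set_fin: "finite {card I | I. I \<subseteq> X \<and> indep I}"
proof (rule finite_subset[of _ "{..card E}"])
  show "{card I | I. I \<subseteq> X \<and> indep I} \<subseteq> {..card E}"
  proof
    fix c assume "c \<in> {card I | I. I \<subseteq> X \<and> indep I}"
    then obtain I where I: "c = card I" "indep I" by blast
    then have "card I \<le> card E" using indep_E finE card_mono by blast
    then show "c \<in> {..card E}" using I by simp
  qed
qed simp

lemma mrank_ge: "I \<subseteq> X \<Longrightarrow> indep I \<Longrightarrow> card I \<le> mrank indep X"
proof -
  assume a: "I \<subseteq> X" "indep I"
  have "card I \<in> {card I | I. I \<subseteq> X \<and> indep I}" using a by blast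
  then show ?thesis unfolding mrank_def using rank_set_fin[of X] by (simp add: Max_ge)
qed

lemma mrank_ex: "\<exists>I. I \<subseteq> X \<and> indep I \<and> card I = mrank indep X"
proof -
  have "card ({}::'a set) \<in> {card I | I. I \<subseteq> X \<and> indep I}" using indep_empty by blast
  then have "{card I | I. I \<subseteq> X \<and> indep I} \<noteq> {}" by blast
  then have "Max {card I | I. I \<subseteq> X \<and> indep I} \<in> {card I | I. I \<subseteq> X \<and> indep I}"
    by (rule Max_in[OF rank_set_fin])
  then obtain I where "Max {card I | I. I \<subseteq> X \<and> indep I} = card I" "I \<subseteq> X" "indep I"
    by (auto simp only: mem_Collect_eq)
  then show ?thesis unfolding mrank_def by metis
qed

lemma mrank_mono: "X \<subseteq> Y \<Longrightarrow> mrank indep X \<le> mrank indep Y"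
proof -
  assume XY: "X \<subseteq> Y"
  obtain I where I: "I \<subseteq> X" "indep I" "card I = mrank indep X" using mrank_ex by blast
  have "I \<subseteq> Y" using I XY by blast
  from mrank_ge[OF this I(2)] I(3) show ?thesis by simp
qed

lemma mrank_indep: "indep I \<Longrightarrow> mrank indep I = card I"
proof -
  assume I: "indep I"
  obtain J where "J \<subseteq> I" "indep J" "card J = mrank indep I" using mrank_ex by blast
  then have "mrank indep I \<le> card I" using card_mono[OF indep_fin[OF I], of J] by simp
  moreover have "card I \<le> mrank indep I" using mrank_ge[OF subset_refl I] .
  ultimately show ?thesis by simp
qed

lemma extend_basis:
  assumes "I \<subseteq> X" "indep I"
  shows "\<exists>K. I \<subseteq> K \<and> K \<subseteq> X \<and> indep K \<and> card K = mrank indep X"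
proof -
  let ?K = "{K. I \<subseteq> K \<and> K \<subseteq> X \<and> indep K}"
  have fin: "finite (card ` ?K)"
  proof -
    have "?K \<subseteq> Pow E" using indep_E by blast
    then have "finite ?K" using finE finite_subset by (metis finite_Pow_iff)
    then show ?thesis by blast
  qed
  have ne: "card ` ?K \<noteq> {}" using assms by blast
  obtain K where K: "K \<in> ?K" "card K = Max (card ` ?K)" using Max_in[OF fin ne] by auto
  have "card K = mrank indep X"
  proof (rule ccontr)
    assume "card K \<noteq> mrank indep X"
    moreover have "card K \<le> mrank indep X" using K mrank_ge by blast
    ultimately have lt: "card K < mrank indep X" by simp
    obtain L where L: "L \<subseteq> X" "indep L" "card L = mrank indep X" using mrank_ex by blast
    obtain f where f: "f \<in> L - K" "indep (insert f K)" using augment[of K L] K L lt by auto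
    have "insert f K \<in> ?K" using f K L by auto
    then have "card (insert f K) \<le> Max (card ` ?K)" using fin by simp
    moreover have "card (insert f K) = Suc (card K)" using f indep_fin K by auto
    ultimately show False using K by simp
  qed
  then show ?thesis using K by blast
qed

lemma mcl_mono:
  assumes "Y \<subseteq> X" shows "mcl E indep Y \<subseteq> mcl E indep X"
proof
  fix e assume "e \<in> mcl E indep Y"
  then have e: "e \<in> E" "mrank indep (insert e Y) = mrank indep Y" unfolding mcl_def by auto
  show "e \<in> mcl E indep X"
  proof (rule ccontr)
    assume "e \<notin> mcl E indep X"
    then have ne: "mrank indep (insert e X) \<noteq> mrank indep X" using e unfolding mcl_def by blast
    have "mrank indep X \<le> mrank indep (insert e X)" by (rule mrank_mono) blast
    then have lt: "mrank indep X < mrank indep (insert e X)" using ne by simp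
    obtain I where I: "I \<subseteq> Y" "indep I" "card I = mrank indep Y" using mrank_ex by blast
    have IX: "I \<subseteq> X" using I(1) assms by blast
    obtain K where K: "I \<subseteq> K" "K \<subseteq> X" "indep K" "card K = mrank indep X"
      using extend_basis[OF IX I(2)] by blast
    obtain J where J: "J \<subseteq> insert e X" "indep J" "card J = mrank indep (insert e X)" using mrank_ex by blast
    have cKJ: "card K < card J" using K(4) J(3) lt by simp
    obtain g where g: "g \<in> J - K" "indep (insert g K)" using augment[OF K(3) J(2) cKJ] by blast
    have cg: "card (insert g K) = Suc (card K)" using g(1) indep_fin[OF K(3)] by simp
    have "g \<notin> X"
    proof
      assume "g \<in> X"
      then have "insert g K \<subseteq> X" using K(2) by blast
      from mrank_ge[OF this g(2)] have "card (insert g K) \<le> mrank indep X" .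
      then show False using cg K(4) by simp
    qed
    then have "g = e" using g(1) J(1) by blast
    have sub: "insert e I \<subseteq> insert g K" using K(1) \<open>g = e\<close> by blast
    have ie: "indep (insert e I)" by (rule indep_subset[OF g(2) sub])
    have "e \<notin> I" using g(1) \<open>g = e\<close> K(1) by blast
    have s2: "insert e I \<subseteq> insert e Y" using I(1) by blast
    have "card (insert e I) \<le> mrank indep (insert e Y)" by (rule mrank_ge[OF s2 ie])
    moreover have "card (insert e I) = Suc (card I)" using \<open>e \<notin> I\<close> indep_fin[OF I(2)] by simp
    ultimately show False using e(2) I(3) by simp
  qed
qed

lemma dep_in_cl:
  assumes "indep I" "\<not> indep (insert u I)" "u \<in> E"
  shows "u \<in> mcl E indep I"
proof -
  have ge: "mrank indep I \<le> mrank indep (insert u I)" by (rule mrank_mono) blast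
  obtain J where J: "J \<subseteq> insert u I" "indep J" "card J = mrank indep (insert u I)" using mrank_ex by blast
  have fI: "finite (insert u I)" using indep_fin[OF assms(1)] by simp
  have "card J \<le> card I"
  proof (rule ccontr)
    assume "\<not> card J \<le> card I"
    moreover have "card J \<le> card (insert u I)" by (rule card_mono[OF fI J(1)])
    moreover have "card (insert u I) \<le> Suc (card I)" using indep_fin[OF assms(1)] by (simp add: card_insert_if)
    ultimately have "card J = card (insert u I)" by simp
    then have "J = insert u I" using card_subset_eq[OF fI J(1)] by simp
    then show False using J(2) assms(2) by simp
  qed
  then have "mrank indep (insert u I) = mrank indep I" using ge J(3) mrank_indep[OF assms(1)] by simp
  then show ?thesis using assms(3) unfolding mcl_def by blast
qed

lemma flat_basis_cl:
  assumes F: "flat E indep F" and rk: "mrank indep F = k" and B: "B \<subseteq> F" "indep B" "card B = k"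
  shows "mcl E indep B = F"
proof
  have "mcl E indep F = F" using F unfolding flat_def by blast
  then show "mcl E indep B \<subseteq> F" using mcl_mono[OF B(1)] by simp
  show "F \<subseteq> mcl E indep B"
  proof
    fix e assume e: "e \<in> F"
    have eE: "e \<in> E" using e F unfolding flat_def by blast
    have s1: "insert e B \<subseteq> F" using e B(1) by blast
    have "mrank indep (insert e B) \<le> k" using rk mrank_mono[OF s1] by simp
    moreover have "k \<le> mrank indep (insert e B)" using mrank_ge[of B "insert e B"] B by blast
    ultimately have "mrank indep (insert e B) = mrank indep B" using mrank_indep[OF B(2)] B(3) by simp
    then show "e \<in> mcl E indep B" using eE unfolding mcl_def by blast
  qed
qed

lemma clk_sup: "X \<subseteq> clk E indep k X" unfolding clk_def by blast

lemma clk_in: "k_closed E indep k Z \<Longrightarrow> X \<subseteq> Z \<Longrightarrow> clk E indep k X \<subseteq> Z"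
  unfolding clk_def by blast

lemma flat_kclosed: "flat E indep F \<Longrightarrow> k_closed E indep k F"
proof -
  assume F: "flat E indep F"
  then have a: "F \<subseteq> E" "mcl E indep F = F" unfolding flat_def by blast+
  show ?thesis unfolding k_closed_def
  proof (intro conjI allI impI)
    show "F \<subseteq> E" by (rule a(1))
    fix Y assume "Y \<subseteq> F \<and> int (card Y) \<le> k"
    then have "mcl E indep Y \<subseteq> mcl E indep F" using mcl_mono by blast
    then show "mcl E indep Y \<subseteq> F" using a(2) by simp
  qed
qed

lemma clk_flat: "flat E indep F \<Longrightarrow> clk E indep k F = F"
proof -
  assume F: "flat E indep F"
  have "clk E indep k F \<subseteq> F" by (rule clk_in[OF flat_kclosed[OF F] subset_refl])
  then show ?thesis using clk_sup by blast
qed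



lemma Ustar_prop:
  assumes F: "flat E indep F"
  defines "fam \<equiv> {U. U \<subseteq> E \<and> clk E indep (int (mrank indep F) - 1) U = F}"
  shows "Ustar E indep F \<in> fam \<and> (\<forall>V\<in>fam. V \<noteq> Ustar E indep F \<longrightarrow> glex_less (Ustar E indep F) V)"
proof -
  have sub: "fam \<subseteq> Pow E" unfolding fam_def by blast
  have fin: "finite fam" using finite_subset[OF sub] finE by simp
  have "F \<in> fam" using F clk_flat[OF F] unfolding fam_def flat_def by blast
  then have ne: "fam \<noteq> {}" by blast
  have ff: "\<forall>X\<in>fam. finite X" using sub finE finite_subset by blast
  show ?thesis unfolding Ustar_def fam_def[symmetric] by (rule glex_min_prop[OF fin ne ff])
qed

lemma Ustar_fam: "flat E indep F \<Longrightarrow> Ustar E indep F \<subseteq> E \<and> clk E indep (int (mrank indep F) - 1) (Ustar E indep F) = F"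
proof -
  assume F: "flat E indep F"
  have "Ustar E indep F \<in> {U. U \<subseteq> E \<and> clk E indep (int (mrank indep F) - 1) U = F}"
    using Ustar_prop[OF F] by (rule conjunct1)
  then show ?thesis by simp
qed

lemma Ustar_E: "flat E indep F \<Longrightarrow> Ustar E indep F \<subseteq> E"
  using Ustar_fam by blast

lemma Ustar_F: "flat E indep F \<Longrightarrow> Ustar E indep F \<subseteq> F"
proof -
  assume F: "flat E indep F"
  have "clk E indep (int (mrank indep F) - 1) (Ustar E indep F) = F" using Ustar_fam[OF F] by blast
  then show ?thesis using clk_sup[where X="Ustar E indep F" and k="int (mrank indep F) - 1"] by simp
qed

lemma Ustar_indep:
  assumes F: "flat E indep F" and rk: "mrank indep F = k" and Y: "Y \<subseteq> Ustar E indep F" and cY: "card Y \<le> k"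
  shows "indep Y"
proof (rule ccontr)
  assume nY: "\<not> indep Y"
  define U where "U = Ustar E indep F"
  define fam where "fam = {U. U \<subseteq> E \<and> clk E indep (int (mrank indep F) - 1) U = F}"
  have UP: "U \<in> fam" "\<forall>V\<in>fam. V \<noteq> U \<longrightarrow> glex_less U V" using Ustar_prop[OF F] unfolding U_def fam_def by (rule conjunct1, rule conjunct2)
  have UE: "U \<subseteq> E" using UP unfolding fam_def by blast
  have fU: "finite U" using UE finE finite_subset by blast
  have fY: "finite Y" using Y fU finite_subset unfolding U_def by blast
  obtain I where I: "I \<subseteq> Y" "indep I" "card I = mrank indep Y" using mrank_ex by blast
  have "I \<noteq> Y" using I nY by blast
  then obtain u where u: "u \<in> Y" "u \<notin> I" using I(1) by blast
  have nI: "\<not> indep (insert u I)"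
  proof
    assume "indep (insert u I)"
    moreover have "insert u I \<subseteq> Y" using u I by blast
    ultimately have "card (insert u I) \<le> mrank indep Y" using mrank_ge by presburger
    moreover have "card (insert u I) = Suc (card I)" using u(2) indep_fin[OF I(2)] by simp
    ultimately show False using I(3) by simp
  qed
  have uU: "u \<in> U" using u Y unfolding U_def by blast
  have uE: "u \<in> E" using uU UE by blast
  have ucl: "u \<in> mcl E indep I" by (rule dep_in_cl[OF I(2) nI uE])
  have "card I < card Y" using psubset_card_mono[OF fY] I(1) \<open>I \<noteq> Y\<close> by blast
  then have cI: "int (card I) \<le> int (mrank indep F) - 1" using cY rk by simp
  have IU: "I \<subseteq> U - {u}" using I(1) Y u unfolding U_def by blast
  have eqZ: "(U - {u} \<subseteq> Z) = (U \<subseteq> Z)" if kc: "k_closed E indep (int (mrank indep F) - 1) Z" for Z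
  proof
    assume sZ: "U - {u} \<subseteq> Z"
    have kc2: "\<forall>Y. Y \<subseteq> Z \<and> int (card Y) \<le> int (mrank indep F) - 1 \<longrightarrow> mcl E indep Y \<subseteq> Z"
      using kc unfolding k_closed_def by (rule conjunct2)
    have "I \<subseteq> Z" using IU sZ by blast
    then have "mcl E indep I \<subseteq> Z" using kc2 cI by blast
    then show "U \<subseteq> Z" using ucl sZ by blast
  qed blast
  have "clk E indep (int (mrank indep F) - 1) (U - {u}) = clk E indep (int (mrank indep F) - 1) U"
  proof -
    have "{Z. U - {u} \<subseteq> Z \<and> k_closed E indep (int (mrank indep F) - 1) Z} = {Z. U \<subseteq> Z \<and> k_closed E indep (int (mrank indep F) - 1) Z}"
      using eqZ by blast
    then show ?thesis unfolding clk_def by simp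
  qed
  then have "U - {u} \<in> fam" using UP(1) UE unfolding fam_def by blast
  moreover have "U - {u} \<noteq> U" using uU by blast
  ultimately have "glex_less U (U - {u})" using UP(2) by (simp add: Ball_def)
  moreover have "card (U - {u}) < card U" by (rule card_Diff1_less[OF fU uU])
  ultimately show False unfolding glex_less_def by linarith
qed

lemma Ustar_basis:
  assumes F: "flat E indep F" and rk: "mrank indep F = k" and B: "B \<subseteq> Ustar E indep F" "card B = k"
  shows "mcl E indep B = F"
proof -
  have "indep B" using Ustar_indep[OF F rk B(1)] B(2) by simp
  moreover have "B \<subseteq> F" using B(1) Ustar_F[OF F] by blast
  ultimately show ?thesis using flat_basis_cl[OF F rk] B(2) by blast
qed


lemma no_up:
  assumes F: "flat E indep F" and rk: "mrank indep F = k" and V: "V \<subseteq> Ustar E indep F"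
    and cV: "card V = Suc k" and x: "x \<in> V" and xm: "x \<noteq> Max V"
    and F': "flat E indep F'" and rk': "mrank indep F' = k'" and kk: "k < k'"
    and sub: "V - {x} \<subseteq> Ustar E indep F'"
  shows False
proof -
  define U where "U = Ustar E indep F"
  define U' where "U' = Ustar E indep F'"
  define fam where "fam = {U. U \<subseteq> E \<and> clk E indep (int (mrank indep F') - 1) U = F'}"
  have UP: "U' \<in> fam" "\<forall>W\<in>fam. W \<noteq> U' \<longrightarrow> glex_less U' W" using Ustar_prop[OF F'] unfolding U'_def fam_def by (rule conjunct1, rule conjunct2)
  have U'E: "U' \<subseteq> E" using Ustar_E[OF F'] unfolding U'_def .
  have fU': "finite U'" using U'E finE finite_subset by blast
  have UF: "U \<subseteq> F" using Ustar_F[OF F] unfolding U_def .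
  have UE: "U \<subseteq> E" using Ustar_E[OF F] unfolding U_def .
  have fV: "finite V" using cV card_ge_0_finite by (metis zero_less_Suc)
  have Vne: "V \<noteq> {}" using cV by auto
  define m where "m = Max V"
  have mV: "m \<in> V" unfolding m_def by (rule Max_in[OF fV Vne])
  have xlm: "x < m" using Max_ge[OF fV x] xm unfolding m_def by simp
  define B where "B = V - {x}"
  define B2 where "B2 = V - {m}"
  have cB: "card B = k" unfolding B_def using cV x fV by simp
  have cB2: "card B2 = k" unfolding B2_def using cV mV fV by simp
  have BU: "B \<subseteq> U" unfolding B_def U_def using V by blast
  have B2U: "B2 \<subseteq> U" unfolding B2_def U_def using V by blast
  have clB: "mcl E indep B = F" unfolding U_def using Ustar_basis[OF F rk] BU cB unfolding U_def by blast
  have clB2: "mcl E indep B2 = F" unfolding U_def using Ustar_basis[OF F rk] B2U cB2 unfolding U_def by blast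
  have mB: "m \<in> B" unfolding B_def using mV xlm by simp
  have BU': "B \<subseteq> U'" using sub unfolding B_def U'_def .
  have mU': "m \<in> U'" using mB BU' by blast
  have xU': "x \<notin> U'"
  proof
    assume xU': "x \<in> U'"
    have VU': "V \<subseteq> Ustar E indep F'" using BU' xU' unfolding B_def U'_def by blast
    have "card V \<le> k'" using cV kk by simp
    then have iV: "indep V" using Ustar_indep[OF F' rk' VU'] by simp
    have "V \<subseteq> F" using V UF unfolding U_def by blast
    then have "card V \<le> mrank indep F" by (rule mrank_ge[OF _ iV])
    then show False using cV rk by simp
  qed
  define U'' where "U'' = insert x (U' - {m})"
  have xE: "x \<in> E" using x V UE unfolding U_def by blast
  have U''E: "U'' \<subseteq> E" unfolding U''_def using xE U'E by blast
  have ck: "int k \<le> int (mrank indep F') - 1" using kk rk' by simp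
  have xF: "x \<in> F" using x V UF unfolding U_def by blast
  have mF: "m \<in> F" using mV V UF unfolding U_def by blast
  have eqZ: "(U'' \<subseteq> Z) = (U' \<subseteq> Z)" if kc: "k_closed E indep (int (mrank indep F') - 1) Z" for Z
  proof -
    have kc2: "\<forall>Y. Y \<subseteq> Z \<and> int (card Y) \<le> int (mrank indep F') - 1 \<longrightarrow> mcl E indep Y \<subseteq> Z"
      using kc unfolding k_closed_def by (rule conjunct2)
    show ?thesis
    proof
      assume sZ: "U'' \<subseteq> Z"
      have "B2 \<subseteq> U''" unfolding B2_def U''_def using BU' unfolding B_def by blast
      then have "B2 \<subseteq> Z" using sZ by blast
      then have "mcl E indep B2 \<subseteq> Z" using kc2 ck cB2 by simp
      then have "m \<in> Z" using clB2 mF by blast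
      then show "U' \<subseteq> Z" using sZ unfolding U''_def by blast
    next
      assume sZ: "U' \<subseteq> Z"
      then have "B \<subseteq> Z" using BU' by blast
      then have "mcl E indep B \<subseteq> Z" using kc2 ck cB by simp
      then have "x \<in> Z" using clB xF by blast
      then show "U'' \<subseteq> Z" using sZ unfolding U''_def by blast
    qed
  qed
  have "{Z. U'' \<subseteq> Z \<and> k_closed E indep (int (mrank indep F') - 1) Z} = {Z. U' \<subseteq> Z \<and> k_closed E indep (int (mrank indep F') - 1) Z}"
    using eqZ by blast
  then have "clk E indep (int (mrank indep F') - 1) U'' = clk E indep (int (mrank indep F') - 1) U'"
    unfolding clk_def by simp
  then have "U'' \<in> fam" using UP(1) U''E unfolding fam_def by simp
  moreover have "U'' \<noteq> U'" using xU' unfolding U''_def by blast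
  ultimately have g1: "glex_less U' U''" using UP(2) by (simp add: Ball_def)
  have fU'': "finite U''" unfolding U''_def using fU' by simp
  have c1: "card U'' = card U'"
  proof -
    have "card U'' = Suc (card (U' - {m}))" unfolding U''_def using xU' fU' by simp
    also have "\<dots> = card U'" by (rule card_Suc_Diff1[OF fU' mU'])
    finally show ?thesis .
  qed
  have D: "U'' - U' \<union> (U' - U'') = {x, m}" unfolding U''_def using xU' mU' xlm by auto
  have "Min {x, m} = x" using xlm by simp
  then have g2: "glex_less U'' U'" unfolding glex_less_def using c1 D \<open>U'' \<noteq> U'\<close> unfolding U''_def by simp
  show False using glex_asym[OF fU' fU'' g1] g2 by simp
qed



lemma Vk_mem:
  assumes "V \<in> V_k E indep k"
  shows "\<exists>F. flat E indep F \<and> mrank indep F = k \<and> V \<subseteq> Ustar E indep F \<and> card V = Suc k \<and> consecutive V (Ustar E indep F)"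
proof -
  obtain U where U: "U \<in> Ustar_k E indep k" "V \<in> Vsets k U" using assms unfolding V_k_def by blast
  obtain F where F: "U = Ustar E indep F" "flat E indep F" "mrank indep F = k" using U(1) unfolding Ustar_k_def by blast
  have "V \<subseteq> U" "card V = Suc k" "consecutive V U" using U(2) unfolding Vsets_def by auto
  then show ?thesis using F by blast
qed

lemma Uk_mem:
  assumes "U \<in> Ustar_k E indep k"
  shows "\<exists>F. flat E indep F \<and> mrank indep F = k \<and> U = Ustar E indep F \<and> k < card U"
  using assms unfolding Ustar_k_def by blast

lemma Uk_fin: "finite (Ustar_k E indep k)"
proof -
  have "Ustar_k E indep k \<subseteq> Pow E" using Uk_mem Ustar_E by blast
  then show ?thesis using finE finite_subset by (metis finite_Pow_iff)
qed

lemma Vk_sub: "V_k E indep k \<subseteq> Pow E"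
proof
  fix V assume "V \<in> V_k E indep k"
  then obtain F where "flat E indep F" "V \<subseteq> Ustar E indep F" using Vk_mem by blast
  then show "V \<in> Pow E" using Ustar_E by blast
qed

lemma Vk_fin: "finite (V_k E indep k)"
  using Vk_sub finE finite_subset by (metis finite_Pow_iff)

lemma lvl0:
  assumes "S \<in> V_k E indep 0"
  shows "card S = 1 \<and> \<not> indep S \<and> S \<subseteq> E"
proof -
  obtain F where F: "flat E indep F" "mrank indep F = 0" "S \<subseteq> Ustar E indep F" "card S = Suc 0"
    using Vk_mem[OF assms] by blast
  have SF: "S \<subseteq> F" using F(3) Ustar_F[OF F(1)] by blast
  have "\<not> indep S"
  proof
    assume "indep S"
    then have "card S \<le> mrank indep F" by (rule mrank_ge[OF SF])
    then show False using F by simp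
  qed
  then show ?thesis using F Ustar_E[OF F(1)] by auto
qed

lemma mid_inj:
  assumes V: "V \<in> V_k E indep k" and x: "x \<in> V" "x \<noteq> Max V"
    and W: "W \<in> V_k E indep k" and y: "y \<in> W" "y \<noteq> Max W"
    and eq: "V - {x} = W - {y}"
  shows "V = W \<and> x = y"
proof -
  obtain F1 where F1: "flat E indep F1" "mrank indep F1 = k" "V \<subseteq> Ustar E indep F1" "card V = Suc k" "consecutive V (Ustar E indep F1)"
    using Vk_mem[OF V] by blast
  obtain F2 where F2: "flat E indep F2" "mrank indep F2 = k" "W \<subseteq> Ustar E indep F2" "card W = Suc k" "consecutive W (Ustar E indep F2)"
    using Vk_mem[OF W] by blast
  have fV: "finite V" and fW: "finite W" using F1(4) F2(4) card_ge_0_finite by (metis zero_less_Suc)+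
  have neV: "V \<noteq> {}" and neW: "W \<noteq> {}" using F1(4) F2(4) by auto
  have "Max V \<in> V - {x}" using Max_in[OF fV neV] x by simp
  then have "Max V \<in> W" using eq by blast
  then have l1: "Max V \<le> Max W" by (rule Max_ge[OF fW])
  have "Max W \<in> W - {y}" using Max_in[OF fW neW] y by simp
  then have "Max W \<in> V" using eq by blast
  then have l2: "Max W \<le> Max V" by (rule Max_ge[OF fV])
  have mx: "Max V = Max W" using l1 l2 by simp
  have c1: "card (V - {x}) = k" using F1(4) x fV by simp
  have c2: "card (W - {y}) = k" using F2(4) y fW by simp
  have "mcl E indep (V - {x}) = F1" using Ustar_basis[OF F1(1) F1(2)] F1(3) c1 by blast
  moreover have "mcl E indep (W - {y}) = F2" using Ustar_basis[OF F2(1) F2(2)] F2(3) c2 by blast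
  ultimately have "F1 = F2" using eq by simp
  then have cW: "consecutive W (Ustar E indep F1)" using F2(5) by simp
  have fU: "finite (Ustar E indep F1)" using Ustar_E[OF F1(1)] finE finite_subset by blast
  have "V = W" using consec_eq[OF fU F1(5) cW] F1(4) F2(4) neV mx by simp
  moreover have "x = y"
  proof (rule ccontr)
    assume "x \<noteq> y"
    then have "y \<in> V - {x}" using y \<open>V = W\<close> by simp
    then show False using eq by simp
  qed
  ultimately show ?thesis by simp
qed

lemma mid_props:
  assumes V: "V \<in> V_k E indep k" and x: "x \<in> V" "x \<noteq> Max V"
  shows "card (V - {x}) = k \<and> indep (V - {x}) \<and> V - {x} \<subseteq> E
    \<and> (\<exists>F. flat E indep F \<and> mrank indep F = k \<and> V - {x} \<subseteq> Ustar E indep F)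
    \<and> (\<forall>F' k'. flat E indep F' \<longrightarrow> mrank indep F' = k' \<longrightarrow> k < k' \<longrightarrow> \<not> V - {x} \<subseteq> Ustar E indep F')"
proof -
  obtain F1 where F1: "flat E indep F1" "mrank indep F1 = k" "V \<subseteq> Ustar E indep F1" "card V = Suc k" "consecutive V (Ustar E indep F1)"
    using Vk_mem[OF V] by blast
  have fV: "finite V" using F1(4) card_ge_0_finite by (metis zero_less_Suc)
  have c1: "card (V - {x}) = k" using F1(4) x fV by simp
  have s1: "V - {x} \<subseteq> Ustar E indep F1" using F1(3) by blast
  have i1: "indep (V - {x})" using Ustar_indep[OF F1(1) F1(2) s1] c1 by simp
  have e1: "V - {x} \<subseteq> E" using s1 Ustar_E[OF F1(1)] by blast
  have nu: "\<forall>F' k'. flat E indep F' \<longrightarrow> mrank indep F' = k' \<longrightarrow> k < k' \<longrightarrow> \<not> V - {x} \<subseteq> Ustar E indep F'"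
    using no_up[OF F1(1) F1(2) F1(3) F1(4) x] by blast
  show ?thesis using c1 i1 e1 nu F1(1) F1(2) s1 by blast
qed

lemma top_props:
  assumes "S \<in> Top E indep k"
  shows "card S = k \<and> indep S \<and> S \<subseteq> E \<and> (\<exists>F. flat E indep F \<and> mrank indep F = k \<and> S \<subseteq> Ustar E indep F)"
proof -
  obtain U where U: "U \<in> Ustar_k E indep k" "S \<subseteq> U" "card S = k" using assms unfolding Top_def by blast
  obtain F where F: "flat E indep F" "mrank indep F = k" "U = Ustar E indep F" using Uk_mem[OF U(1)] by blast
  have s: "S \<subseteq> Ustar E indep F" using U(2) F(3) by simp
  have "indep S" using Ustar_indep[OF F(1) F(2) s] U(3) by simp
  then show ?thesis using U(3) s F Ustar_E[OF F(1)] by blast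
qed

lemma top_card: "card (Top E indep k) = (\<Sum>U\<in>Ustar_k E indep k. card U choose k)"
proof -
  have fin: "\<forall>U\<in>Ustar_k E indep k. finite {B. B \<subseteq> U \<and> card B = k}"
  proof
    fix U assume "U \<in> Ustar_k E indep k"
    then obtain F where "flat E indep F" "U = Ustar E indep F" using Uk_mem by blast
    then have "finite U" using Ustar_E finE finite_subset by blast
    then show "finite {B. B \<subseteq> U \<and> card B = k}" by simp
  qed
  have disj: "\<forall>U1\<in>Ustar_k E indep k. \<forall>U2\<in>Ustar_k E indep k. U1 \<noteq> U2 \<longrightarrow>
      {B. B \<subseteq> U1 \<and> card B = k} \<inter> {B. B \<subseteq> U2 \<and> card B = k} = {}"
  proof (intro ballI impI)
    fix U1 U2 assume U1: "U1 \<in> Ustar_k E indep k" and U2: "U2 \<in> Ustar_k E indep k" and ne: "U1 \<noteq> U2"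
    obtain F1 where F1: "flat E indep F1" "mrank indep F1 = k" "U1 = Ustar E indep F1" using Uk_mem[OF U1] by blast
    obtain F2 where F2: "flat E indep F2" "mrank indep F2 = k" "U2 = Ustar E indep F2" using Uk_mem[OF U2] by blast
    show "{B. B \<subseteq> U1 \<and> card B = k} \<inter> {B. B \<subseteq> U2 \<and> card B = k} = {}"
    proof (rule ccontr)
      assume "{B. B \<subseteq> U1 \<and> card B = k} \<inter> {B. B \<subseteq> U2 \<and> card B = k} \<noteq> {}"
      then obtain B where B: "B \<subseteq> U1" "B \<subseteq> U2" "card B = k" by blast
      have "mcl E indep B = F1" using Ustar_basis[OF F1(1) F1(2)] B F1(3) by blast
      moreover have "mcl E indep B = F2" using Ustar_basis[OF F2(1) F2(2)] B F2(3) by blast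
      ultimately have "U1 = U2" using F1(3) F2(3) by simp
      then show False using ne by simp
    qed
  qed
  have "card (Top E indep k) = (\<Sum>U\<in>Ustar_k E indep k. card {B. B \<subseteq> U \<and> card B = k})"
    unfolding Top_def by (rule card_UN_disjoint[OF Uk_fin]) (use fin disj in auto)
  also have "\<dots> = (\<Sum>U\<in>Ustar_k E indep k. card U choose k)"
  proof (rule sum.cong[OF refl])
    fix U assume "U \<in> Ustar_k E indep k"
    then obtain F where "flat E indep F" "U = Ustar E indep F" using Uk_mem by blast
    then have "finite U" using Ustar_E finE finite_subset by blast
    then show "card {B. B \<subseteq> U \<and> card B = k} = card U choose k" by (rule n_subsets)
  qed
  finally show ?thesis .
qed

lemma top_bound:
  assumes r: "3 \<le> r"
  shows "r * card (V_k E indep (r - 1)) \<le> card (Top E indep (r - 1))"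
proof -
  let ?I = "Ustar_k E indep (r - 1)"
  have finU: "finite U" if UI: "U \<in> ?I" for U
  proof -
    obtain F where "flat E indep F" "U = Ustar E indep F" using Uk_mem[OF UI] by blast
    then show ?thesis using Ustar_E finE finite_subset by blast
  qed
  have "card (V_k E indep (r - 1)) \<le> (\<Sum>U\<in>?I. card (Vsets (r - 1) U))"
    unfolding V_k_def by (rule card_UN_le[OF Uk_fin])
  also have "\<dots> \<le> (\<Sum>U\<in>?I. card U - (r - 1))"
    by (rule sum_mono) (rule vsets_card[OF finU])
  finally have "r * card (V_k E indep (r - 1)) \<le> r * (\<Sum>U\<in>?I. card U - (r - 1))" by (rule mult_le_mono2)
  also have "\<dots> = (\<Sum>U\<in>?I. r * (card U - (r - 1)))" by (simp add: sum_distrib_left)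
  also have "\<dots> \<le> (\<Sum>U\<in>?I. card U choose (r - 1))"
  proof (rule sum_mono)
    fix U assume "U \<in> ?I"
    then have "r - 1 < card U" using Uk_mem by blast
    then have "r \<le> card U" using r by simp
    then show "r * (card U - (r - 1)) \<le> card U choose (r - 1)" by (rule binom_ineq[OF r])
  qed
  also have "\<dots> = card (Top E indep (r - 1))" by (rule top_card[symmetric])
  finally show ?thesis .
qed

end


theorem lemma5p10:
  fixes E :: "'a::linorder set" and indep :: "'a set \<Rightarrow> bool" and r n :: nat
  assumes "matroid E indep"
    and "mrank indep E = r"
    and "card E = n"
    and "r \<ge> 3"
    and "n \<ge> 2 * r"
  shows "(\<Sum>k = 0..r - 1. real (card (V_k E indep k)) * coef n r k) \<le> 1"
proof -
  note M = assms(1)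
  have r3: "3 \<le> r" by (rule assms(4))
  have finE: "finite E" by (rule finE[OF M])
  define L where "L k = (if k = 0 then V_k E indep 0 else if k = r - 1 then Top E indep (r - 1)
      else (\<lambda>(V, x). V - {x}) ` Sigma (V_k E indep k) (\<lambda>V. V - {Max V}))" for k
  define w where "w S = 1 / real (n choose card S)" for S :: "'a set"
  define A where "A = (\<Union>k\<in>{0..r - 1}. L k)"
  have Lsub: "L k \<subseteq> Pow E" for k
  proof (cases "k = 0")
    case True then show ?thesis unfolding L_def using Vk_sub[OF M] by simp
  next
    case False
    show ?thesis
    proof (cases "k = r - 1")
      case True
      then show ?thesis unfolding L_def using top_props[OF M] False by auto
    next
      case False2: False
      show ?thesis
      proof
        fix S assume "S \<in> L k"
        then obtain V x where "V \<in> V_k E indep k" "x \<in> V" "x \<noteq> Max V" "S = V - {x}"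
          unfolding L_def using False False2 by auto
        then show "S \<in> Pow E" using mid_props[OF M] by blast
      qed
    qed
  qed
  have Lfin: "finite (L k)" for k using Lsub[of k] finE finite_subset by (metis finite_Pow_iff)
  have cls0: "card S = 1 \<and> \<not> indep S" if "S \<in> L 0" for S
    using that lvl0[OF M] unfolding L_def by simp
  have clsT: "card S = k \<and> indep S \<and> (\<exists>F. flat E indep F \<and> mrank indep F = k \<and> S \<subseteq> Ustar E indep F)
      \<and> (k < r - 1 \<longrightarrow> (\<forall>F' k'. flat E indep F' \<longrightarrow> mrank indep F' = k' \<longrightarrow> k < k' \<longrightarrow> \<not> S \<subseteq> Ustar E indep F'))"
    if S: "S \<in> L k" and k: "1 \<le> k" "k \<le> r - 1" for S k
  proof (cases "k = r - 1")
    case True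
    have "k \<noteq> 0" using k by simp
    then have "L k = Top E indep (r - 1)" using True unfolding L_def by simp
    then have "S \<in> Top E indep (r - 1)" using S by simp
    then show ?thesis using top_props[OF M] True by blast
  next
    case False
    then obtain V x where V: "V \<in> V_k E indep k" "x \<in> V" "x \<noteq> Max V" "S = V - {x}"
      using S k unfolding L_def by auto
    show ?thesis using mid_props[OF M V(1) V(2) V(3)] V(4) by blast
  qed
  have anti: "\<forall>S\<in>A. \<forall>T\<in>A. S \<subseteq> T \<longrightarrow> S = T"
  proof (intro ballI impI)
    fix S T assume SA: "S \<in> A" and TA: "T \<in> A" and ST: "S \<subseteq> T"
    obtain i where i: "i \<le> r - 1" "S \<in> L i" using SA unfolding A_def by auto
    obtain j where j: "j \<le> r - 1" "T \<in> L j" using TA unfolding A_def by auto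
    show "S = T"
    proof (rule ccontr)
      assume ne: "S \<noteq> T"
      have fT: "finite T" using Lsub[of j] j(2) finE finite_subset by blast
      have lt: "card S < card T" using psubset_card_mono[OF fT] ST ne by blast
      have cS1: "1 \<le> card S"
      proof (cases "i = 0")
        case True then show ?thesis using cls0 i by simp
      next
        case False then show ?thesis using clsT[OF i(2)] i(1) by simp
      qed
      show False
      proof (cases "j = 0")
        case True then show False using cls0 j lt cS1 by simp
      next
        case False
        then have Tp: "card T = j" "indep T" "\<exists>F. flat E indep F \<and> mrank indep F = j \<and> T \<subseteq> Ustar E indep F"
          using clsT[OF j(2)] j(1) by simp_all
        have "indep S" using indep_subset[OF M Tp(2) ST] .
        then have i0: "i \<noteq> 0" using cls0[of S] i by (metis)
        then have Sp: "card S = i" "i < r - 1 \<longrightarrow> (\<forall>F' k'. flat E indep F' \<longrightarrow> mrank indep F' = k' \<longrightarrow> i < k' \<longrightarrow> \<not> S \<subseteq> Ustar E indep F')"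
          using clsT[OF i(2)] i(1) by simp_all
        have ij: "i < j" using Sp(1) Tp(1) lt by simp
        then have "i < r - 1" using j(1) by simp
        moreover obtain F' where F': "flat E indep F'" "mrank indep F' = j" "T \<subseteq> Ustar E indep F'" using Tp(3) by blast
        ultimately show False using Sp(2) ij ST by blast
      qed
    qed
  qed
  have Asub: "A \<subseteq> Pow E" unfolding A_def using Lsub by blast
  have lym': "(\<Sum>S\<in>A. w S) \<le> 1" unfolding w_def using lym[OF finE Asub anti] assms(3) by simp
  have disj: "L i \<inter> L j = {}" if "i \<in> {0..r - 1}" "j \<in> {0..r - 1}" "i \<noteq> j" for i j
  proof (rule ccontr)
    assume "L i \<inter> L j \<noteq> {}"
    then obtain S where S: "S \<in> L i" "S \<in> L j" by blast
    show False
    proof (cases "i = 0")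
      case True
      then have "j \<noteq> 0" using that by simp
      then show False using cls0 clsT[OF S(2)] that S True by auto
    next
      case False
      show False
      proof (cases "j = 0")
        case True then show False using cls0 clsT[OF S(1)] that S False by auto
      next
        case False2: False
        have "card S = i" using clsT[OF S(1)] False that by simp
        moreover have "card S = j" using clsT[OF S(2)] False2 that by simp
        ultimately show False using that by simp
      qed
    qed
  qed
  have sumA: "(\<Sum>S\<in>A. w S) = (\<Sum>k = 0..r - 1. \<Sum>S\<in>L k. w S)"
    unfolding A_def by (rule sum.UNION_disjoint) (use Lfin disj in auto)
  have termk: "real (card (V_k E indep k)) * coef n r k \<le> (\<Sum>S\<in>L k. w S)" if k: "k \<in> {0..r - 1}" for k
  proof -
    have rn: "r - 1 \<le> n" using assms(5) by simp
    show ?thesis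
    proof (cases "k = 0")
      case True
      have "(\<Sum>S\<in>L k. w S) = (\<Sum>S\<in>L k. 1 / real n)"
      proof (rule sum.cong[OF refl])
        fix S assume "S \<in> L k" then show "w S = 1 / real n" using cls0 True unfolding w_def by simp
      qed
      also have "\<dots> = real (card (V_k E indep k)) * coef n r k"
        using True r3 unfolding L_def coef_def by simp
      finally show ?thesis by simp
    next
      case False
      show ?thesis
      proof (cases "k = r - 1")
        case True
        have "(\<Sum>S\<in>L k. w S) = (\<Sum>S\<in>L k. 1 / real (n choose (r - 1)))"
        proof (rule sum.cong[OF refl])
          fix S assume "S \<in> L k" then show "w S = 1 / real (n choose (r - 1))" using clsT[of S k] True False unfolding w_def by simp
        qed
        also have "\<dots> = real (card (Top E indep (r - 1))) / real (n choose (r - 1))"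
          using True False unfolding L_def by simp
        also have "\<dots> \<ge> real (r * card (V_k E indep (r - 1))) / real (n choose (r - 1))"
        proof -
          have "real (r * card (V_k E indep (r - 1))) \<le> real (card (Top E indep (r - 1)))"
            using top_bound[OF M r3] by (simp only: of_nat_le_iff)
          then show ?thesis by (rule divide_right_mono) simp
        qed
        finally have "real (r * card (V_k E indep (r - 1))) / real (n choose (r - 1)) \<le> (\<Sum>S\<in>L k. w S)" .
        moreover have "real (card (V_k E indep k)) * coef n r k = real (r * card (V_k E indep (r - 1))) / real (n choose (r - 1))"
          using True unfolding coef_def by simp
        ultimately show ?thesis by simp
      next
        case False2: False
        have Lk: "L k = (\<lambda>(V, x). V - {x}) ` Sigma (V_k E indep k) (\<lambda>V. V - {Max V})"
          using False False2 unfolding L_def by simp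
        have inj: "inj_on (\<lambda>(V, x). V - {x}) (Sigma (V_k E indep k) (\<lambda>V. V - {Max V}))"
        proof (rule inj_onI)
          fix p q assume p: "p \<in> Sigma (V_k E indep k) (\<lambda>V. V - {Max V})" and q: "q \<in> Sigma (V_k E indep k) (\<lambda>V. V - {Max V})"
            and eq: "(\<lambda>(V, x). V - {x}) p = (\<lambda>(V, x). V - {x}) q"
          obtain V x where pv: "p = (V, x)" "V \<in> V_k E indep k" "x \<in> V" "x \<noteq> Max V" using p by auto
          obtain W y where qv: "q = (W, y)" "W \<in> V_k E indep k" "y \<in> W" "y \<noteq> Max W" using q by auto
          have "V - {x} = W - {y}" using eq pv(1) qv(1) by simp
          then show "p = q" using mid_inj[OF M pv(2) pv(3) pv(4) qv(2) qv(3) qv(4)] pv(1) qv(1) by simp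
        qed
        have cardV: "card (V - {Max V}) = k" if VV: "V \<in> V_k E indep k" for V
        proof -
          have "card V = Suc k" using Vk_mem[OF M VV] by blast
          then have fV: "finite V" using card_ge_0_finite by (metis zero_less_Suc)
          have "V \<noteq> {}" using \<open>card V = Suc k\<close> by auto
          then have "Max V \<in> V" by (rule Max_in[OF fV])
          then show ?thesis using fV \<open>card V = Suc k\<close> by simp
        qed
        have finS: "finite (Sigma (V_k E indep k) (\<lambda>V. V - {Max V}))"
        proof (rule finite_SigmaI[OF Vk_fin[OF M]])
          fix V assume VV: "V \<in> V_k E indep k"
          have "V \<subseteq> E" using Vk_sub[OF M] VV by blast
          then show "finite (V - {Max V})" using finite_Diff[OF finite_subset[OF _ finE]] by blast
        qed
        have "card (L k) = card (Sigma (V_k E indep k) (\<lambda>V. V - {Max V}))"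
          unfolding Lk using card_image[OF inj] .
        also have "\<dots> = (\<Sum>V\<in>V_k E indep k. card (V - {Max V}))"
        proof (rule card_SigmaI[OF Vk_fin[OF M]], intro ballI)
          fix V assume VV: "V \<in> V_k E indep k"
          have "V \<subseteq> E" using Vk_sub[OF M] VV by blast
          then show "finite (V - {Max V})" using finite_Diff[OF finite_subset[OF _ finE]] by blast
        qed
        also have "\<dots> = (\<Sum>V\<in>V_k E indep k. k)" using cardV by simp
        also have "\<dots> = card (V_k E indep k) * k" by simp
        finally have cL: "card (L k) = card (V_k E indep k) * k" .
        have kr: "1 \<le> k" "k \<le> r - 1" using False k by auto
        have "(\<Sum>S\<in>L k. w S) = (\<Sum>S\<in>L k. 1 / real (n choose k))"
        proof (rule sum.cong[OF refl])
          fix S assume "S \<in> L k" then show "w S = 1 / real (n choose k)" using clsT[of S k] kr unfolding w_def by simp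
        qed
        also have "\<dots> = real (card (V_k E indep k) * k) / real (n choose k)" using cL by simp
        also have "\<dots> = real (card (V_k E indep k)) * coef n r k" using False False2 unfolding coef_def by simp
        finally show ?thesis by simp
      qed
    qed
  qed
  have "(\<Sum>k = 0..r - 1. real (card (V_k E indep k)) * coef n r k) \<le> (\<Sum>k = 0..r - 1. \<Sum>S\<in>L k. w S)"
    by (rule sum_mono) (rule termk)
  also have "\<dots> = (\<Sum>S\<in>A. w S)" using sumA by simp
  also have "\<dots> \<le> 1" by (rule lym')
  finally show ?thesis .
qed

end
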